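(* (i) Let $L$ be a lattice, let $\gamma$ be a congruence relation of $L$, and let $K=L/\gamma$ be the quotient lattice, with canonical surjection $u\mapsto [u]_\gamma$. For every congruence relation $\alpha$ of $L$, the relation \[ \alpha/\gamma=\bigl\{([u]_\gamma,[v]_\gamma) \mid u,v\in L,\ (u,v)\in\alpha\bigr\} \] is a tolerance relation of $K$. (ii) Conversely, for every lattice $K$ and every tolerance relation $\tau$ of $K$, there exist a lattice $L$, congruence relations $\alpha$ and $\gamma$ of $L$, and a lattice isomorphism $\varphi\colon L/\gamma\to K$ such that \[ \tau=\varphi(\alpha/\gamma)=\bigl\{(\varphi(X),\varphi(Y)) \mid (X,Y)\in\alpha/\gamma\bigr\}. \]
   Context: A tolerance relation of a lattice $L$ is a binary relation $\rho\subseteq L\times L$ that is reflexive, symmetric, and has the Substitution Properties: if $(a,b)\in\rho$ and $(c,d)\in\rho$ then $(a\vee c,b\vee d)\in\rho$ and $(a\wedge c,b\wedge d)\in\rho$. A congruence relation is a transitive tolerance. $[u]_\gamma$ denotes the $\gamma$-class of $u$. *)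

theory Defs
  imports Main
begin

definition is_lattice :: "'a set \<Rightarrow> ('a \<Rightarrow> 'a \<Rightarrow> 'a) \<Rightarrow> ('a \<Rightarrow> 'a \<Rightarrow> 'a) \<Rightarrow> bool" where
  "is_lattice A j m \<longleftrightarrow>
     (\<forall>x\<in>A. \<forall>y\<in>A. j x y \<in> A \<and> m x y \<in> A) \<and>
     (\<forall>x\<in>A. \<forall>y\<in>A. j x y = j y x \<and> m x y = m y x) \<and>
     (\<forall>x\<in>A. \<forall>y\<in>A. \<forall>z\<in>A. j (j x y) z = j x (j y z) \<and> m (m x y) z = m x (m y z)) \<and>
     (\<forall>x\<in>A. \<forall>y\<in>A. j x (m x y) = x \<and> m x (j x y) = x)"

definition tolerance :: "'a set \<Rightarrow> ('a \<Rightarrow> 'a \<Rightarrow> 'a) \<Rightarrow> ('a \<Rightarrow> 'a \<Rightarrow> 'a) \<Rightarrow> ('a \<times> 'a) set \<Rightarrow> bool" where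
  "tolerance A j m \<rho> \<longleftrightarrow>
     \<rho> \<subseteq> A \<times> A \<and> (\<forall>x\<in>A. (x, x) \<in> \<rho>) \<and> sym \<rho> \<and>
     (\<forall>a b c d. (a, b) \<in> \<rho> \<longrightarrow> (c, d) \<in> \<rho> \<longrightarrow>
        (j a c, j b d) \<in> \<rho> \<and> (m a c, m b d) \<in> \<rho>)"

definition congruence :: "'a set \<Rightarrow> ('a \<Rightarrow> 'a \<Rightarrow> 'a) \<Rightarrow> ('a \<Rightarrow> 'a \<Rightarrow> 'a) \<Rightarrow> ('a \<times> 'a) set \<Rightarrow> bool" where
  "congruence A j m \<rho> \<longleftrightarrow> tolerance A j m \<rho> \<and> trans \<rho>"

text \<open>Operation induced on classes: for a congruence gamma,
  quot_op gamma f [x] [y] = [f x y].\<close>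

definition quot_op :: "('a \<times> 'a) set \<Rightarrow> ('a \<Rightarrow> 'a \<Rightarrow> 'a) \<Rightarrow> 'a set \<Rightarrow> 'a set \<Rightarrow> 'a set" where
  "quot_op \<gamma> f X Y = {z. \<exists>x\<in>X. \<exists>y\<in>Y. (f x y, z) \<in> \<gamma>}"

definition rel_quot :: "'a set \<Rightarrow> ('a \<times> 'a) set \<Rightarrow> ('a \<times> 'a) set \<Rightarrow> ('a set \<times> 'a set) set" where
  "rel_quot A \<alpha> \<gamma> = {(\<gamma> `` {u}, \<gamma> `` {v}) | u v. u \<in> A \<and> v \<in> A \<and> (u, v) \<in> \<alpha>}"

definition lattice_iso ::
  "'a set \<Rightarrow> ('a \<Rightarrow> 'a \<Rightarrow> 'a) \<Rightarrow> ('a \<Rightarrow> 'a \<Rightarrow> 'a) \<Rightarrow>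
   'b set \<Rightarrow> ('b \<Rightarrow> 'b \<Rightarrow> 'b) \<Rightarrow> ('b \<Rightarrow> 'b \<Rightarrow> 'b) \<Rightarrow> ('a \<Rightarrow> 'b) \<Rightarrow> bool" where
  "lattice_iso A j m B j' m' \<phi> \<longleftrightarrow> bij_betw \<phi> A B \<and>
     (\<forall>x\<in>A. \<forall>y\<in>A. \<phi> (j x y) = j' (\<phi> x) (\<phi> y) \<and> \<phi> (m x y) = m' (\<phi> x) (\<phi> y))"

end

theory Submission
  imports Defs
begin

lemma quot_op_class0:
  assumes t: "trans \<gamma>" and sub: "\<And>a b c d. (a,b)\<in>\<gamma> \<Longrightarrow> (c,d)\<in>\<gamma> \<Longrightarrow> (f a c, f b d)\<in>\<gamma>"
    and ru: "(u,u)\<in>\<gamma>" and rv: "(v,v)\<in>\<gamma>"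
  shows "quot_op \<gamma> f (\<gamma> `` {u}) (\<gamma> `` {v}) = \<gamma> `` {f u v}"
proof (rule set_eqI)
  fix z
  show "z \<in> quot_op \<gamma> f (\<gamma> `` {u}) (\<gamma> `` {v}) \<longleftrightarrow> z \<in> \<gamma> `` {f u v}"
  proof
    assume "z \<in> quot_op \<gamma> f (\<gamma> `` {u}) (\<gamma> `` {v})"
    then obtain x y where "(u,x)\<in>\<gamma>" "(v,y)\<in>\<gamma>" "(f x y, z)\<in>\<gamma>"
      unfolding quot_op_def by blast
    moreover have "(f u v, f x y) \<in> \<gamma>" using sub calculation by blast
    ultimately show "z \<in> \<gamma> `` {f u v}" using t by (meson Image_singleton_iff transD)
  next
    assume "z \<in> \<gamma> `` {f u v}"
    then show "z \<in> quot_op \<gamma> f (\<gamma> `` {u}) (\<gamma> `` {v})"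
      unfolding quot_op_def using ru rv by blast
  qed
qed

lemma quot_op_class:
  assumes c: "congruence L f g \<gamma>" and u: "u \<in> L" and v: "v \<in> L"
  shows "quot_op \<gamma> f (\<gamma> `` {u}) (\<gamma> `` {v}) = \<gamma> `` {f u v}"
  and "quot_op \<gamma> g (\<gamma> `` {u}) (\<gamma> `` {v}) = \<gamma> `` {g u v}"
proof -
  have t: "trans \<gamma>" and sub: "\<And>a b c d. (a,b)\<in>\<gamma> \<Longrightarrow> (c,d)\<in>\<gamma> \<Longrightarrow> (f a c, f b d)\<in>\<gamma> \<and> (g a c, g b d)\<in>\<gamma>"
    and r: "\<forall>x\<in>L. (x,x)\<in>\<gamma>"
    using c unfolding congruence_def tolerance_def by blast+
  show "quot_op \<gamma> f (\<gamma> `` {u}) (\<gamma> `` {v}) = \<gamma> `` {f u v}"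
    by (rule quot_op_class0[OF t]) (use sub r u v in auto)
  show "quot_op \<gamma> g (\<gamma> `` {u}) (\<gamma> `` {v}) = \<gamma> `` {g u v}"
    by (rule quot_op_class0[OF t]) (use sub r u v in auto)
qed

lemma part1:
  assumes "is_lattice L j m" "congruence L j m \<gamma>" "congruence L j m \<alpha>"
  shows "tolerance (L // \<gamma>) (quot_op \<gamma> j) (quot_op \<gamma> m) (rel_quot L \<alpha> \<gamma>)"
proof -
  have aL: "\<alpha> \<subseteq> L \<times> L" and ar: "\<forall>x\<in>L. (x,x)\<in>\<alpha>" and asym: "sym \<alpha>"
    and asub: "\<And>a b c d. (a,b)\<in>\<alpha> \<Longrightarrow> (c,d)\<in>\<alpha> \<Longrightarrow> (j a c, j b d)\<in>\<alpha> \<and> (m a c, m b d)\<in>\<alpha>"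
    using assms(3) unfolding congruence_def tolerance_def by blast+
  show ?thesis
    unfolding tolerance_def
  proof (intro conjI allI impI)
    show "rel_quot L \<alpha> \<gamma> \<subseteq> L // \<gamma> \<times> L // \<gamma>"
      unfolding rel_quot_def by (auto intro: quotientI)
    show "\<forall>x\<in>L // \<gamma>. (x, x) \<in> rel_quot L \<alpha> \<gamma>"
      unfolding rel_quot_def quotient_def using ar by blast
    show "sym (rel_quot L \<alpha> \<gamma>)"
      unfolding rel_quot_def sym_def using asym aL by (auto dest: symD)
  next
    fix a b c d assume ab: "(a, b) \<in> rel_quot L \<alpha> \<gamma>" and cd: "(c, d) \<in> rel_quot L \<alpha> \<gamma>"
    then obtain u v u' v' where uv: "u\<in>L" "v\<in>L" "(u,v)\<in>\<alpha>" "a = \<gamma>``{u}" "b = \<gamma>``{v}"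
      and uv': "u'\<in>L" "v'\<in>L" "(u',v')\<in>\<alpha>" "c = \<gamma>``{u'}" "d = \<gamma>``{v'}"
      unfolding rel_quot_def by blast
    have A1: "(j u u', j v v') \<in> \<alpha>" and A2: "(m u u', m v v') \<in> \<alpha>" using asub uv(3) uv'(3) by auto
    have e: "quot_op \<gamma> j a c = \<gamma>``{j u u'}" "quot_op \<gamma> j b d = \<gamma>``{j v v'}"
      "quot_op \<gamma> m a c = \<gamma>``{m u u'}" "quot_op \<gamma> m b d = \<gamma>``{m v v'}"
      using quot_op_class[OF assms(2) uv(1) uv'(1)] quot_op_class[OF assms(2) uv(2) uv'(2)] uv uv' by simp_all
    have "j u u' \<in> L" "j v v' \<in> L" "m u u' \<in> L" "m v v' \<in> L" using A1 A2 aL by auto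
    then show "(quot_op \<gamma> j a c, quot_op \<gamma> j b d) \<in> rel_quot L \<alpha> \<gamma>" and
       "(quot_op \<gamma> m a c, quot_op \<gamma> m b d) \<in> rel_quot L \<alpha> \<gamma>"
      unfolding e rel_quot_def using A1 A2 by blast+
  qed
qed

context
  fixes K j m
  assumes lat: "is_lattice K j m"
begin

lemma cl: "x\<in>K \<Longrightarrow> y\<in>K \<Longrightarrow> j x y \<in> K" "x\<in>K \<Longrightarrow> y\<in>K \<Longrightarrow> m x y \<in> K"
  using lat unfolding is_lattice_def by auto
lemma com: "x\<in>K \<Longrightarrow> y\<in>K \<Longrightarrow> j x y = j y x" "x\<in>K \<Longrightarrow> y\<in>K \<Longrightarrow> m x y = m y x"
  using lat unfolding is_lattice_def by auto
lemma ass: "x\<in>K \<Longrightarrow> y\<in>K \<Longrightarrow> z\<in>K \<Longrightarrow> j (j x y) z = j x (j y z)"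
  "x\<in>K \<Longrightarrow> y\<in>K \<Longrightarrow> z\<in>K \<Longrightarrow> m (m x y) z = m x (m y z)"
  using lat unfolding is_lattice_def by auto
lemma abs: "x\<in>K \<Longrightarrow> y\<in>K \<Longrightarrow> j x (m x y) = x" "x\<in>K \<Longrightarrow> y\<in>K \<Longrightarrow> m x (j x y) = x"
  using lat unfolding is_lattice_def by auto

lemma idem: "x\<in>K \<Longrightarrow> j x x = x" "x\<in>K \<Longrightarrow> m x x = x"
proof -
  assume x: "x\<in>K"
  have "j x x = j x (m x (j x x))" using abs(2)[OF x x] by simp
  also have "\<dots> = x" using abs(1)[OF x cl(1)[OF x x]] .
  finally show "j x x = x" .
  have "m x x = m x (j x (m x x))" using abs(1)[OF x x] by simp
  also have "\<dots> = x" using abs(2)[OF x cl(2)[OF x x]] .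
  finally show "m x x = x" .
qed

lemma le_iff: "a\<in>K \<Longrightarrow> b\<in>K \<Longrightarrow> m a b = a \<longleftrightarrow> j a b = b"
proof -
  assume a: "a\<in>K" and b: "b\<in>K"
  show ?thesis
  proof
    assume h: "m a b = a"
    have "j a b = j (m a b) b" using h by simp
    also have "\<dots> = j b (m a b)" using com(1)[OF cl(2)[OF a b] b] .
    also have "\<dots> = j b (m b a)" using com(2)[OF a b] by simp
    also have "\<dots> = b" using abs(1)[OF b a] .
    finally show "j a b = b" .
  next
    assume h: "j a b = b"
    have "m a b = m a (j a b)" using h by simp
    also have "\<dots> = a" using abs(2)[OF a b] .
    finally show "m a b = a" .
  qed
qed

lemma join_lub: "a\<in>K \<Longrightarrow> b\<in>K \<Longrightarrow> c\<in>K \<Longrightarrow> m a c = a \<Longrightarrow> m b c = b \<Longrightarrow> m (j a b) c = j a b"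
proof -
  assume a: "a\<in>K" and b: "b\<in>K" and c: "c\<in>K" and h1: "m a c = a" and h2: "m b c = b"
  have "j a c = c" "j b c = c" using le_iff[OF a c] le_iff[OF b c] h1 h2 by auto
  then have "j (j a b) c = c" using ass(1)[OF a b c] by simp
  then show ?thesis using le_iff[OF cl(1)[OF a b] c] by simp
qed

lemma meet_glb: "a\<in>K \<Longrightarrow> b\<in>K \<Longrightarrow> c\<in>K \<Longrightarrow> m c a = c \<Longrightarrow> m c b = c \<Longrightarrow> m c (m a b) = c"
proof -
  assume a: "a\<in>K" and b: "b\<in>K" and c: "c\<in>K" and h1: "m c a = c" and h2: "m c b = c"
  have "m c (m a b) = m (m c a) b" using ass(2)[OF c a b] by simp
  then show ?thesis using h1 h2 by simp
qed

lemma le_trans: "a\<in>K \<Longrightarrow> b\<in>K \<Longrightarrow> c\<in>K \<Longrightarrow> m a b = a \<Longrightarrow> m b c = b \<Longrightarrow> m a c = a"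
proof -
  assume a: "a\<in>K" and b: "b\<in>K" and c: "c\<in>K" and h1: "m a b = a" and h2: "m b c = b"
  have "m a c = m (m a b) c" using h1 by simp
  also have "\<dots> = m a (m b c)" using ass(2)[OF a b c] .
  also have "\<dots> = a" using h1 h2 by simp
  finally show ?thesis .
qed

lemma le_join: "a\<in>K \<Longrightarrow> b\<in>K \<Longrightarrow> m a (j a b) = a" "a\<in>K \<Longrightarrow> b\<in>K \<Longrightarrow> m b (j a b) = b"
proof -
  assume a: "a\<in>K" and b: "b\<in>K"
  show "m a (j a b) = a" using abs(2)[OF a b] .
  have "m b (j b a) = b" using abs(2)[OF b a] .
  then show "m b (j a b) = b" using com(1)[OF a b] by simp
qed

lemma meet_le: "a\<in>K \<Longrightarrow> b\<in>K \<Longrightarrow> m (m a b) a = m a b" "a\<in>K \<Longrightarrow> b\<in>K \<Longrightarrow> m (m a b) b = m a b"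
proof -
  assume a: "a\<in>K" and b: "b\<in>K"
  have "m (m a b) b = m a (m b b)" using ass(2)[OF a b b] .
  then show "m (m a b) b = m a b" using idem(2)[OF b] by simp
  have "m (m a b) a = m a (m a b)" using com(2)[OF cl(2)[OF a b] a] .
  also have "\<dots> = m (m a a) b" using ass(2)[OF a a b] by simp
  also have "\<dots> = m a b" using idem(2)[OF a] by simp
  finally show "m (m a b) a = m a b" .
qed

lemma mono_j: "a\<in>K \<Longrightarrow> a'\<in>K \<Longrightarrow> x\<in>K \<Longrightarrow> x'\<in>K \<Longrightarrow> m a x = a \<Longrightarrow> m a' x' = a'
   \<Longrightarrow> m (j a a') (j x x') = j a a'"
proof -
  assume a: "a\<in>K" and a': "a'\<in>K" and x: "x\<in>K" and x': "x'\<in>K" and h1: "m a x = a" and h2: "m a' x' = a'"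
  have xx: "j x x' \<in> K" using cl(1)[OF x x'] .
  have "m a (j x x') = a" using le_trans[OF a x xx h1 le_join(1)[OF x x']] .
  moreover have "m a' (j x x') = a'" using le_trans[OF a' x' xx h2 le_join(2)[OF x x']] .
  ultimately show ?thesis using join_lub[OF a a' xx] by simp
qed

lemma mono_m: "a\<in>K \<Longrightarrow> a'\<in>K \<Longrightarrow> x\<in>K \<Longrightarrow> x'\<in>K \<Longrightarrow> m a x = a \<Longrightarrow> m a' x' = a'
   \<Longrightarrow> m (m a a') (m x x') = m a a'"
proof -
  assume a: "a\<in>K" and a': "a'\<in>K" and x: "x\<in>K" and x': "x'\<in>K" and h1: "m a x = a" and h2: "m a' x' = a'"
  have aa: "m a a' \<in> K" using cl(2)[OF a a'] .
  have "m (m a a') x = m a a'" using le_trans[OF aa a x meet_le(1)[OF a a'] h1] .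
  moreover have "m (m a a') x' = m a a'" using le_trans[OF aa a' x' meet_le(2)[OF a a'] h2] .
  ultimately show ?thesis using meet_glb[OF x x' aa] by simp
qed

end


lemma tol_convex:
  assumes lat: "is_lattice K j m" and tol: "tolerance K j m \<tau>"
    and K: "a\<in>K" "b\<in>K" "x\<in>K" "x'\<in>K" and ab: "(a,b)\<in>\<tau>"
    and le: "m a x = a" "m x b = x" "m a x' = a" "m x' b = x'"
  shows "(x,x')\<in>\<tau>"
proof -
  have r: "\<And>y. y\<in>K \<Longrightarrow> (y,y)\<in>\<tau>" and sy: "sym \<tau>"
    and sub: "\<And>a b c d. (a,b)\<in>\<tau> \<Longrightarrow> (c,d)\<in>\<tau> \<Longrightarrow> (j a c, j b d)\<in>\<tau> \<and> (m a c, m b d)\<in>\<tau>"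
    using tol unfolding tolerance_def by blast+
  have ba: "(b,a)\<in>\<tau>" using sy ab by (meson symD)
  have p1: "(m x b, m x a) \<in> \<tau>" using sub[OF r[OF K(3)] ba] by blast
  have p2: "(m x' a, m x' b) \<in> \<tau>" using sub[OF r[OF K(4)] ab] by blast
  have "(j (m x b) (m x' a), j (m x a) (m x' b)) \<in> \<tau>" using sub[OF p1 p2] by blast
  moreover have "m x a = a" using le(1) com(2)[OF lat K(3) K(1)] by simp
  moreover have "m x' a = a" using le(3) com(2)[OF lat K(4) K(1)] by simp
  moreover have "j a x = x" using le(1) le_iff[OF lat K(1) K(3)] by simp
  then have "j x a = x" using com(1)[OF lat K(3) K(1)] by simp
  moreover have "j a x' = x'" using le(3) le_iff[OF lat K(1) K(4)] by simp
  ultimately show ?thesis using le(2,4) by simp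
qed

lemma tol_interval:
  assumes lat: "is_lattice K j m" and tol: "tolerance K j m \<tau>"
    and xx: "(x,x')\<in>\<tau>"
  shows "(m x x', j x x')\<in>\<tau>"
proof -
  have r: "\<And>y. y\<in>K \<Longrightarrow> (y,y)\<in>\<tau>" and sy: "sym \<tau>" and sb: "\<tau> \<subseteq> K \<times> K"
    and sub: "\<And>a b c d. (a,b)\<in>\<tau> \<Longrightarrow> (c,d)\<in>\<tau> \<Longrightarrow> (j a c, j b d)\<in>\<tau> \<and> (m a c, m b d)\<in>\<tau>"
    using tol unfolding tolerance_def by blast+
  have K: "x\<in>K" "x'\<in>K" using xx sb by auto
  have x'x: "(x',x)\<in>\<tau>" using sy xx by (meson symD)
  have p1: "(m x x', m x' x') \<in> \<tau>" using sub[OF xx r[OF K(2)]] by blast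
  have p2: "(m x' x, m x x) \<in> \<tau>" using sub[OF x'x r[OF K(1)]] by blast
  have "(j (m x x') (m x' x), j (m x' x') (m x x)) \<in> \<tau>" using sub[OF p1 p2] by blast
  moreover have "m x' x = m x x'" using com(2)[OF lat K(2) K(1)] .
  moreover have "j (m x x') (m x x') = m x x'" using idem(1)[OF lat cl(2)[OF lat K]] .
  moreover have "j x' x = j x x'" using com(1)[OF lat K(2) K(1)] .
  moreover have "m x x = x" "m x' x' = x'" using idem(2)[OF lat] K by auto
  ultimately show ?thesis by simp
qed

lemma part2:
  fixes K :: "'a set"
  assumes lat: "is_lattice K j m" and tol: "tolerance K j m \<tau>"
  shows "\<exists>(L :: 'a list set) jL mL \<alpha> \<gamma> \<phi>.
          is_lattice L jL mL \<and> congruence L jL mL \<alpha> \<and> congruence L jL mL \<gamma> \<and>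
          lattice_iso (L // \<gamma>) (quot_op \<gamma> jL) (quot_op \<gamma> mL) K j m \<phi> \<and>
          \<tau> = {(\<phi> X, \<phi> Y) | X Y. (X, Y) \<in> rel_quot L \<alpha> \<gamma>}"
proof -
  have r: "\<And>y. y\<in>K \<Longrightarrow> (y,y)\<in>\<tau>" and sy: "sym \<tau>" and sb: "\<tau> \<subseteq> K \<times> K"
    and sub: "\<And>a b c d. (a,b)\<in>\<tau> \<Longrightarrow> (c,d)\<in>\<tau> \<Longrightarrow> (j a c, j b d)\<in>\<tau> \<and> (m a c, m b d)\<in>\<tau>"
    using tol unfolding tolerance_def by blast+
  define L where "L = {[x,a,b] | x a b. x\<in>K \<and> a\<in>K \<and> b\<in>K \<and> (a,b)\<in>\<tau> \<and> m a x = a \<and> m x b = x}"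
  define jL where "jL = (\<lambda>u v. map2 j u v)"
  define mL where "mL = (\<lambda>u v. map2 m u v)"
  define \<gamma> where "\<gamma> = {(u,v). u\<in>L \<and> v\<in>L \<and> hd u = hd v}"
  define \<alpha> where "\<alpha> = {(u,v). u\<in>L \<and> v\<in>L \<and> tl u = tl v}"
  define \<phi> where "\<phi> = (\<lambda>X::'a list set. hd (SOME u. u\<in>X))"
  have Lmem: "u \<in> L \<longleftrightarrow> (\<exists>x a b. u = [x,a,b] \<and> x\<in>K \<and> a\<in>K \<and> b\<in>K \<and> (a,b)\<in>\<tau> \<and> m a x = a \<and> m x b = x)" for u
    unfolding L_def by blast
  have Lin: "[x,a,b] \<in> L" if "x\<in>K" "a\<in>K" "b\<in>K" "(a,b)\<in>\<tau>" "m a x = a" "m x b = x" for x a b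
    unfolding L_def using that by blast
  have jLc: "jL [x,a,b] [y,c,d] = [j x y, j a c, j b d]" for x a b y c d
    unfolding jL_def by simp
  have mLc: "mL [x,a,b] [y,c,d] = [m x y, m a c, m b d]" for x a b y c d
    unfolding mL_def by simp
  have Ldest: "\<exists>x a b. u = [x,a,b] \<and> x\<in>K \<and> a\<in>K \<and> b\<in>K" if "u\<in>L" for u
    using that unfolding L_def by blast
  have hdtl: "hd (jL u v) = j (hd u) (hd v) \<and> hd (mL u v) = m (hd u) (hd v) \<and>
     tl (jL u v) = map2 j (tl u) (tl v) \<and> tl (mL u v) = map2 m (tl u) (tl v) \<and> hd u \<in> K"
    if hu: "u\<in>L" and hv: "v\<in>L" for u v
  proof -
    obtain x a b where "u = [x,a,b]" "x\<in>K" using Ldest[OF hu] by blast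
    moreover obtain y c d where "v = [y,c,d]" using Ldest[OF hv] by blast
    ultimately show ?thesis unfolding jL_def mL_def by simp
  qed
  have clos: "jL u v \<in> L \<and> mL u v \<in> L" if hu: "u\<in>L" and hv: "v\<in>L" for u v
  proof -
    obtain x a b where u: "u = [x,a,b]" "x\<in>K" "a\<in>K" "b\<in>K" "(a,b)\<in>\<tau>" "m a x = a" "m x b = x"
      using hu unfolding L_def by blast
    obtain y c d where v: "v = [y,c,d]" "y\<in>K" "c\<in>K" "d\<in>K" "(c,d)\<in>\<tau>" "m c y = c" "m y d = y"
      using hv unfolding L_def by blast
    have t1: "(j a c, j b d)\<in>\<tau>" "(m a c, m b d)\<in>\<tau>" using sub[OF u(5) v(5)] by auto
    have t2: "m (j a c) (j x y) = j a c" "m (m a c) (m x y) = m a c"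
      using mono_j[OF lat u(3) v(3) u(2) v(2) u(6) v(6)] mono_m[OF lat u(3) v(3) u(2) v(2) u(6) v(6)] by auto
    have t3: "m (j x y) (j b d) = j x y" "m (m x y) (m b d) = m x y"
      using mono_j[OF lat u(2) v(2) u(4) v(4) u(7) v(7)] mono_m[OF lat u(2) v(2) u(4) v(4) u(7) v(7)] by auto
    have "[j x y, j a c, j b d] \<in> L"
      by (rule Lin) (use cl[OF lat] u v t1 t2 t3 in auto)
    moreover have "[m x y, m a c, m b d] \<in> L"
      by (rule Lin) (use cl[OF lat] u v t1 t2 t3 in auto)
    ultimately show ?thesis unfolding u(1) v(1) jLc mLc by simp
  qed
  have isl: "is_lattice L jL mL"
    unfolding is_lattice_def
  proof (intro conjI ballI)
    fix u v assume "u\<in>L" "v\<in>L"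
    then show "jL u v \<in> L" "mL u v \<in> L" using clos by auto
  next
    fix u v assume hu: "u\<in>L" and hv: "v\<in>L"
    obtain x a b where "u = [x,a,b]" "x\<in>K" "a\<in>K" "b\<in>K" using Ldest[OF hu] by blast
    moreover obtain y c d where "v = [y,c,d]" "y\<in>K" "c\<in>K" "d\<in>K" using Ldest[OF hv] by blast
    ultimately show "jL u v = jL v u" "mL u v = mL v u" "jL u (mL u v) = u" "mL u (jL u v) = u"
      using com[OF lat] abs[OF lat] cl[OF lat] jLc mLc by auto
  next
    fix u v w assume hu: "u\<in>L" and hv: "v\<in>L" and hw: "w\<in>L"
    obtain x a b where "u = [x,a,b]" "x\<in>K" "a\<in>K" "b\<in>K" using Ldest[OF hu] by blast
    moreover obtain y c d where "v = [y,c,d]" "y\<in>K" "c\<in>K" "d\<in>K" using Ldest[OF hv] by blast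
    moreover obtain z e f where "w = [z,e,f]" "z\<in>K" "e\<in>K" "f\<in>K" using Ldest[OF hw] by blast
    ultimately show "jL (jL u v) w = jL u (jL v w)" "mL (mL u v) w = mL u (mL v w)"
      using ass[OF lat] jLc mLc by auto
  qed
  have cg: "congruence L jL mL \<gamma>"
    unfolding congruence_def tolerance_def
  proof (intro conjI allI impI ballI)
    show "\<gamma> \<subseteq> L \<times> L" "sym \<gamma>" "trans \<gamma>" unfolding \<gamma>_def sym_def trans_def by auto
    show "(x,x)\<in>\<gamma>" if "x\<in>L" for x using that unfolding \<gamma>_def by auto
  next
    fix a b c d assume ab: "(a,b)\<in>\<gamma>" and cd: "(c,d)\<in>\<gamma>"
    then have in4: "a\<in>L" "b\<in>L" "c\<in>L" "d\<in>L" unfolding \<gamma>_def by auto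
    have "hd (jL a c) = hd (jL b d) \<and> hd (mL a c) = hd (mL b d)"
      using in4 ab cd hdtl unfolding \<gamma>_def by auto
    then show "(jL a c, jL b d) \<in> \<gamma>" and "(mL a c, mL b d) \<in> \<gamma>"
      using clos in4 unfolding \<gamma>_def by auto
  qed
  have ca: "congruence L jL mL \<alpha>"
    unfolding congruence_def tolerance_def
  proof (intro conjI allI impI ballI)
    show "\<alpha> \<subseteq> L \<times> L" "sym \<alpha>" "trans \<alpha>" unfolding \<alpha>_def sym_def trans_def by auto
    show "(x,x)\<in>\<alpha>" if "x\<in>L" for x using that unfolding \<alpha>_def by auto
  next
    fix a b c d assume ab: "(a,b)\<in>\<alpha>" and cd: "(c,d)\<in>\<alpha>"
    then have in4: "a\<in>L" "b\<in>L" "c\<in>L" "d\<in>L" unfolding \<alpha>_def by auto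
    have "tl (jL a c) = tl (jL b d) \<and> tl (mL a c) = tl (mL b d)"
      using in4 ab cd hdtl unfolding \<alpha>_def by auto
    then show "(jL a c, jL b d) \<in> \<alpha>" and "(mL a c, mL b d) \<in> \<alpha>"
      using clos in4 unfolding \<alpha>_def by auto
  qed
  have cls: "\<gamma> `` {u} = {w\<in>L. hd w = hd u}" if "u\<in>L" for u
    using that unfolding \<gamma>_def by auto
  have phic: "\<phi> (\<gamma> `` {u}) = hd u" if "u\<in>L" for u
  proof -
    have "u \<in> \<gamma> `` {u}" using that cls by auto
    then have "(SOME w. w \<in> \<gamma> `` {u}) \<in> \<gamma> `` {u}" by (rule someI)
    then show ?thesis unfolding \<phi>_def using cls[OF that] by auto
  qed
  have hdK: "hd u \<in> K" if "u\<in>L" for u using that hdtl by blast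
  have iso: "lattice_iso (L // \<gamma>) (quot_op \<gamma> jL) (quot_op \<gamma> mL) K j m \<phi>"
    unfolding lattice_iso_def bij_betw_def
  proof (intro conjI ballI)
    show "inj_on \<phi> (L // \<gamma>)"
    proof (rule inj_onI)
      fix X Y assume "X \<in> L // \<gamma>" "Y \<in> L // \<gamma>" "\<phi> X = \<phi> Y"
      then obtain u v where "u\<in>L" "v\<in>L" "X = \<gamma>``{u}" "Y = \<gamma>``{v}" "hd u = hd v"
        using phic by (auto elim!: quotientE)
      then show "X = Y" using cls by auto
    qed
    show "\<phi> ` (L // \<gamma>) = K"
    proof
      show "\<phi> ` (L // \<gamma>) \<subseteq> K" using phic hdK by (auto elim!: quotientE)
      show "K \<subseteq> \<phi> ` (L // \<gamma>)"
      proof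
        fix x assume x: "x\<in>K"
        have "[x,x,x] \<in> L" using x r idem[OF lat] by (simp add: Lin)
        then show "x \<in> \<phi> ` (L // \<gamma>)" using phic
          by (metis image_eqI list.sel(1) quotientI)
      qed
    qed
  next
    fix X Y assume "X \<in> L // \<gamma>" "Y \<in> L // \<gamma>"
    then obtain u v where uv: "u\<in>L" "v\<in>L" "X = \<gamma>``{u}" "Y = \<gamma>``{v}"
      by (auto elim!: quotientE)
    have e1: "quot_op \<gamma> jL X Y = \<gamma>``{jL u v}" "quot_op \<gamma> mL X Y = \<gamma>``{mL u v}"
      using quot_op_class[OF cg uv(1,2)] uv by auto
    have "hd (jL u v) = j (hd u) (hd v)" "hd (mL u v) = m (hd u) (hd v)"
      using uv hdtl by auto
    then show "\<phi> (quot_op \<gamma> jL X Y) = j (\<phi> X) (\<phi> Y)" "\<phi> (quot_op \<gamma> mL X Y) = m (\<phi> X) (\<phi> Y)"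
      using e1 phic clos uv by auto
  qed
  have teq: "\<tau> = {(\<phi> X, \<phi> Y) | X Y. (X, Y) \<in> rel_quot L \<alpha> \<gamma>}"
  proof
    show "\<tau> \<subseteq> {(\<phi> X, \<phi> Y) | X Y. (X, Y) \<in> rel_quot L \<alpha> \<gamma>}"
    proof
      fix p assume p: "p \<in> \<tau>"
      obtain x x' where pe: "p = (x,x')" by fastforce
      have xx: "(x,x')\<in>\<tau>" using p pe by simp
      have K: "x\<in>K" "x'\<in>K" using xx sb by auto
      have iv: "(m x x', j x x') \<in> \<tau>" using tol_interval[OF lat tol xx] .
      have l1: "m (m x x') x = m x x'" "m x (j x x') = x" "m (m x x') x' = m x x'" "m x' (j x x') = x'"
        using meet_le[OF lat] le_join[OF lat] K by auto
      have uL: "[x, m x x', j x x'] \<in> L" "[x', m x x', j x x'] \<in> L"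
        using K cl[OF lat] iv l1 by (simp_all add: Lin)
      then have "([x, m x x', j x x'], [x', m x x', j x x']) \<in> \<alpha>" unfolding \<alpha>_def by auto
      then have "(\<gamma>``{[x, m x x', j x x']}, \<gamma>``{[x', m x x', j x x']}) \<in> rel_quot L \<alpha> \<gamma>"
        using uL unfolding rel_quot_def by blast
      moreover have "\<phi> (\<gamma>``{[x, m x x', j x x']}) = x" "\<phi> (\<gamma>``{[x', m x x', j x x']}) = x'"
        using phic uL by auto
      ultimately show "p \<in> {(\<phi> X, \<phi> Y) | X Y. (X, Y) \<in> rel_quot L \<alpha> \<gamma>}" using pe by force
    qed
    show "{(\<phi> X, \<phi> Y) | X Y. (X, Y) \<in> rel_quot L \<alpha> \<gamma>} \<subseteq> \<tau>"
    proof
      fix p assume "p \<in> {(\<phi> X, \<phi> Y) | X Y. (X, Y) \<in> rel_quot L \<alpha> \<gamma>}"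
      then obtain u v where uv: "u\<in>L" "v\<in>L" "(u,v)\<in>\<alpha>" "p = (\<phi> (\<gamma>``{u}), \<phi> (\<gamma>``{v}))"
        unfolding rel_quot_def by blast
      obtain x a b where u: "u = [x,a,b]" "x\<in>K" "a\<in>K" "b\<in>K" "(a,b)\<in>\<tau>" "m a x = a" "m x b = x"
        using uv(1) unfolding L_def by blast
      obtain y c d where v: "v = [y,c,d]" "y\<in>K" "c\<in>K" "d\<in>K" "(c,d)\<in>\<tau>" "m c y = c" "m y d = y"
        using uv(2) unfolding L_def by blast
      have "c = a" "d = b" using uv(3) u v unfolding \<alpha>_def by auto
      then have "(x,y)\<in>\<tau>" using tol_convex[OF lat tol] u v by metis
      then show "p \<in> \<tau>" using uv phic u v by simp
    qed
  qed
  show ?thesis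
    apply (rule exI[of _ L], rule exI[of _ jL], rule exI[of _ mL], rule exI[of _ \<alpha>], rule exI[of _ \<gamma>], rule exI[of _ \<phi>])
    using isl ca cg iso teq by (intro conjI)
qed

theorem theorem2:
  shows
   "(\<forall>(L :: 'a set) j m \<gamma> \<alpha>.
       is_lattice L j m \<and> congruence L j m \<gamma> \<and> congruence L j m \<alpha> \<longrightarrow>
       tolerance (L // \<gamma>) (quot_op \<gamma> j) (quot_op \<gamma> m) (rel_quot L \<alpha> \<gamma>))
    \<and>
    (\<forall>(K :: 'b set) j m \<tau>.
       is_lattice K j m \<and> tolerance K j m \<tau> \<longrightarrow>
       (\<exists>(L :: 'b list set) jL mL \<alpha> \<gamma> \<phi>.
          is_lattice L jL mL \<and> congruence L jL mL \<alpha> \<and> congruence L jL mL \<gamma> \<and>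
          lattice_iso (L // \<gamma>) (quot_op \<gamma> jL) (quot_op \<gamma> mL) K j m \<phi> \<and>
          \<tau> = {(\<phi> X, \<phi> Y) | X Y. (X, Y) \<in> rel_quot L \<alpha> \<gamma>}))"
proof (intro conjI allI impI)
  fix L :: "'a set" and j m \<gamma> \<alpha>
  assume "is_lattice L j m \<and> congruence L j m \<gamma> \<and> congruence L j m \<alpha>"
  then show "tolerance (L // \<gamma>) (quot_op \<gamma> j) (quot_op \<gamma> m) (rel_quot L \<alpha> \<gamma>)"
    using part1 by blast
next
  fix K :: "'b set" and j m \<tau>
  assume h: "is_lattice K j m \<and> tolerance K j m \<tau>"
  show "\<exists>(L :: 'b list set) jL mL \<alpha> \<gamma> \<phi>.
          is_lattice L jL mL \<and> congruence L jL mL \<alpha> \<and> congruence L jL mL \<gamma> \<and>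
          lattice_iso (L // \<gamma>) (quot_op \<gamma> jL) (quot_op \<gamma> mL) K j m \<phi> \<and>
          \<tau> = {(\<phi> X, \<phi> Y) | X Y. (X, Y) \<in> rel_quot L \<alpha> \<gamma>}"
    using part2[of K j m \<tau>] h by blast
qed

end
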